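(* Let $\ast$ be a composition on $\mathbb{L}$ that admits Taylor expansion, i.e., for all $f,g,h\in\mathbb{L}$ with $g>\mathbb{R}$ and $h\prec g$ the sum $\sum_{n=0}^\infty\frac{f^{(n)}\ast g}{n!}h^n$ exists and equals $f\ast(g+h)$. Then $\ast$ obeys the chain rule: $(f\ast g)'=(f'\ast g)\cdot g'$ for all $f,g\in\mathbb{L}$ with $g>\mathbb{R}$.
   Context: Fix distinct symbols $\ell_\alpha$ for all ordinals $\alpha$. Exponent sequences $r=(r_\beta)$ are families of reals over all ordinals, zero beyond some ordinal; monomials $\ell^r=\prod_\beta\ell_\beta^{r_\beta}$ form a group $\mathfrak{L}$ ($\ell^r\ell^s=\ell^{r+s}$), ordered by $\ell^r\prec\ell^s$ iff $r\ne s$ and $r_\beta<s_\beta$ at the least differing $\beta$; $\ell_\alpha$ is the monomial with exponent $1$ at $\alpha$ and $0$ elsewhere, $x:=\ell_0$. With $\sigma(\ell^r)=\{\beta:r_\beta\neq0\}$, $\mathfrak{L}_{<\alpha}=\{\mathfrak{m}:\sigma(\mathfrak{m})\subseteq\alpha\}$, $\mathbb{L}_{<\alpha}=\mathbb{R}[[\mathfrak{L}_{<\alpha}]]$ is the Hahn field of series with well-based support (no infinite strictly increasing sequence), ordered by the sign of the leading coefficient, and $\mathbb{L}=\bigcup_\alpha\mathbb{L}_{<\alpha}$. $f\prec g$ means $\mathfrak{d}(f)\prec\mathfrak{d}(g)$, where $\mathfrak{d}$ is the largest monomial of the support ($\mathfrak{d}(0)=0$, below all monomials). $g>\mathbb{R}$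 means $g>c$ for all real $c$; $\mathbb{L}^{>\mathbb{R}}$ is the class of such $g$. Summable families: all members in one $\mathbb{L}_{<\alpha}$, union of supports well-based, each monomial in finitely many supports; sums coefficientwise. Logarithm: $\log\ell^r=\sum r_\beta\ell_{\beta+1}$ and $\log(c\,\mathfrak{d}(f)(1+\epsilon))=\log\mathfrak{d}(f)+\log c+\sum_{n\ge1}\frac{(-1)^{n-1}}{n}\epsilon^n$ for $c\in\mathbb{R}^{>0}$, $\epsilon\prec1$. $f'$, $f^{(n)}$ refer to the unique $\mathbb{R}$-linear derivation on $\mathbb{L}$ with $\ell_\alpha'=\prod_{\beta<\alpha}\ell_\beta^{-1}$ commuting with sums of summable families. A composition on $\mathbb{L}$ is a map $\ast:\mathbb{L}\times\mathbb{L}^{>\mathbb{R}}\to\mathbb{L}$ such that (CL1) each $f\mapsto f\ast g$ is an $\mathbb{R}$-algebra endomorphism; (CL2) $f\ast x=f$, $x\ast g=g$; (CL3) $\log(f\ast g)=(\log f)\ast g$ for $f>0$; (CL4) $f\mapsto f\ast g$ maps summable families to summable families and commutes with their sums; (CL5) $(f\ast g)\ast h=f\ast(g\ast h)$. *)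

theory Defs
  imports Complex_Main
begin

text \<open>Logarithmic hyperseries over the ordinals of a well-ordered type 'o.
  Exponent sequences are functions 'o to real; a series is its coefficient
  function on exponent sequences (monomials).\<close>

type_synonym 'o lexp = "'o \<Rightarrow> real"
type_synonym 'o ser = "'o lexp \<Rightarrow> real"

definition mless :: "'o::wellorder lexp \<Rightarrow> 'o lexp \<Rightarrow> bool" where
  "mless r s \<longleftrightarrow> r \<noteq> s \<and> r (LEAST b. r b \<noteq> s b) < s (LEAST b. r b \<noteq> s b)"

definition supp :: "'o ser \<Rightarrow> 'o lexp set" where
  "supp f = {r. f r \<noteq> 0}"

definition wellbased :: "'o::wellorder lexp set \<Rightarrow> bool" where
  "wellbased S \<longleftrightarrow> \<not> (\<exists>s::nat \<Rightarrow> 'o lexp. \<forall>n. s n \<in> S \<and> mless (s n) (s (Suc n)))"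

definition expbelow :: "'o::wellorder \<Rightarrow> 'o lexp \<Rightarrow> bool" where
  "expbelow a r \<longleftrightarrow> (\<forall>b. r b \<noteq> 0 \<longrightarrow> b < a)"

definition inLlt :: "'o::wellorder \<Rightarrow> 'o ser \<Rightarrow> bool" where
  "inLlt a f \<longleftrightarrow> supp f \<subseteq> {r. expbelow a r} \<and> wellbased (supp f)"

definition inL :: "'o::wellorder ser \<Rightarrow> bool" where
  "inL f \<longleftrightarrow> (\<exists>a. inLlt a f)"

definition summable_fam :: "('i \<Rightarrow> 'o::wellorder ser) \<Rightarrow> bool" where
  "summable_fam F \<longleftrightarrow> (\<exists>a. \<forall>i. supp (F i) \<subseteq> {r. expbelow a r})
      \<and> wellbased (\<Union>i. supp (F i)) \<and> (\<forall>m. finite {i. F i m \<noteq> 0})"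

definition fsum :: "('i \<Rightarrow> 'o ser) \<Rightarrow> 'o ser" where
  "fsum F = (\<lambda>m. sum (\<lambda>i. F i m) {i. F i m \<noteq> 0})"

definition smono :: "'o lexp \<Rightarrow> 'o ser" where
  "smono r = (\<lambda>m. if m = r then 1 else 0)"

definition sconst :: "real \<Rightarrow> 'o ser" where
  "sconst c = (\<lambda>m. if m = (\<lambda>_. 0) then c else 0)"

definition sadd :: "'o ser \<Rightarrow> 'o ser \<Rightarrow> 'o ser" where
  "sadd f g = (\<lambda>m. f m + g m)"

definition sscale :: "real \<Rightarrow> 'o ser \<Rightarrow> 'o ser" where
  "sscale c f = (\<lambda>m. c * f m)"

definition ssub :: "'o ser \<Rightarrow> 'o ser \<Rightarrow> 'o ser" where
  "ssub f g = (\<lambda>m. f m - g m)"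

text \<open>Cauchy product (the index set is finite for well-based supports)\<close>
definition smult :: "'o ser \<Rightarrow> 'o ser \<Rightarrow> 'o ser" where
  "smult f g = (\<lambda>m. sum (\<lambda>a. f a * g (\<lambda>b. m b - a b))
                     {a. f a \<noteq> 0 \<and> g (\<lambda>b. m b - a b) \<noteq> 0})"

definition spow :: "'o ser \<Rightarrow> nat \<Rightarrow> 'o ser" where
  "spow f n = (smult f ^^ n) (sconst 1)"

definition ell :: "'o \<Rightarrow> 'o ser" where
  "ell a = smono (\<lambda>b. if b = a then 1 else 0)"

definition xL :: "'o::wellorder ser" where
  "xL = ell (LEAST b. True)"

text \<open>exponent of the dominant monomial d(f) (meaningful for nonzero well-based f)\<close>
definition dexp :: "'o::wellorder ser \<Rightarrow> 'o lexp" where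
  "dexp f = (THE r. f r \<noteq> 0 \<and> (\<forall>s. f s \<noteq> 0 \<longrightarrow> s = r \<or> mless s r))"

text \<open>f \<prec> g, with d(0) = 0 below all monomials\<close>
definition sprec :: "'o::wellorder ser \<Rightarrow> 'o ser \<Rightarrow> bool" where
  "sprec f g \<longleftrightarrow> g \<noteq> (\<lambda>_. 0) \<and> (f = (\<lambda>_. 0) \<or> mless (dexp f) (dexp g))"

definition spos :: "'o::wellorder ser \<Rightarrow> bool" where
  "spos f \<longleftrightarrow> f \<noteq> (\<lambda>_. 0) \<and> f (dexp f) > 0"

definition sgtR :: "'o::wellorder ser \<Rightarrow> bool" where
  "sgtR g \<longleftrightarrow> (\<forall>c. spos (ssub g (sconst c)))"

definition osucc :: "'o::wellorder \<Rightarrow> 'o" where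
  "osucc b = (LEAST c. b < c)"

definition slog :: "'o::wellorder ser \<Rightarrow> 'o ser" where
  "slog f = (let r = dexp f; c = f r;
              eps = ssub (sscale (1 / c) (smult f (smono (\<lambda>b. - r b)))) (sconst 1)
           in sadd (sadd (fsum (\<lambda>b. sscale (r b) (ell (osucc b)))) (sconst (ln c)))
                   (fsum (\<lambda>n::nat. if n = 0 then (\<lambda>_. 0)
                          else sscale ((-1) ^ (n - 1) / real n) (spow eps n))))"

definition der :: "'o::wellorder ser \<Rightarrow> 'o ser" where
  "der f = fsum (\<lambda>(r, b). sscale (f r * r b) (smono (\<lambda>c. r c - (if c \<le> b then 1 else 0))))"

text \<open>Axioms CL1--CL5 (summable families indexed by nat \<times> monomials, which
  suffices since any summable family has at most that many nonzero members).\<close>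
definition composition :: "('o::wellorder ser \<Rightarrow> 'o ser \<Rightarrow> 'o ser) \<Rightarrow> bool" where
  "composition cmp \<longleftrightarrow>
    (\<forall>g. inL g \<and> sgtR g \<longrightarrow>
        (\<forall>f. inL f \<longrightarrow> inL (cmp f g))
      \<and> (\<forall>f h. inL f \<and> inL h \<longrightarrow> cmp (sadd f h) g = sadd (cmp f g) (cmp h g))
      \<and> (\<forall>f h. inL f \<and> inL h \<longrightarrow> cmp (smult f h) g = smult (cmp f g) (cmp h g))
      \<and> (\<forall>c f. inL f \<longrightarrow> cmp (sscale c f) g = sscale c (cmp f g))
      \<and> cmp (sconst 1) g = sconst 1)
  \<and> (\<forall>f. inL f \<longrightarrow> cmp f xL = f)
  \<and> (\<forall>g. inL g \<and> sgtR g \<longrightarrow> cmp xL g = g)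
  \<and> (\<forall>f g. inL f \<and> spos f \<and> inL g \<and> sgtR g \<longrightarrow> slog (cmp f g) = cmp (slog f) g)
  \<and> (\<forall>g (F :: nat \<times> 'o lexp \<Rightarrow> 'o ser). inL g \<and> sgtR g \<and> summable_fam F \<longrightarrow>
        summable_fam (\<lambda>i. cmp (F i) g) \<and> fsum (\<lambda>i. cmp (F i) g) = cmp (fsum F) g)
  \<and> (\<forall>f g h. inL f \<and> inL g \<and> sgtR g \<and> inL h \<and> sgtR h \<longrightarrow>
        cmp (cmp f g) h = cmp f (cmp g h))"

definition admits_taylor :: "('o::wellorder ser \<Rightarrow> 'o ser \<Rightarrow> 'o ser) \<Rightarrow> bool" where
  "admits_taylor cmp \<longleftrightarrow>
    (\<forall>f g h. inL f \<and> inL g \<and> sgtR g \<and> inL h \<and> sprec h g \<longrightarrow>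
       (let F = (\<lambda>n::nat. sscale (1 / fact n) (smult (cmp ((der ^^ n) f) g) (spow h n)))
        in summable_fam F \<and> fsum F = cmp f (sadd g h)))"

end

theory Submission
  imports Defs "HOL-Library.Function_Algebras"
begin

definition bot0 :: "'o::wellorder" where "bot0 = (LEAST b. True)"

lemma bot0_le: "bot0 \<le> (b::'o::wellorder)"
  unfolding bot0_def by (rule Least_le) simp

definition pos :: "'o::wellorder lexp \<Rightarrow> bool" where "pos z \<longleftrightarrow> mless 0 z"
definition nn :: "'o::wellorder lexp \<Rightarrow> bool" where "nn z \<longleftrightarrow> z = 0 \<or> pos z"
definition scl :: "real \<Rightarrow> 'o lexp \<Rightarrow> 'o lexp" where "scl c z = (\<lambda>b. c * z b)"

lemma pos_intro:
  fixes z :: "'o::wellorder lexp"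
  assumes "z k > 0" "\<forall>c<k. z c = 0"
  shows "pos z"
proof -
  have z0: "z \<noteq> 0" using assms(1) by auto
  have L: "(LEAST b. (0::'o lexp) b \<noteq> z b) = k"
    by (rule Least_equality) (use assms in \<open>auto simp: not_less[symmetric]\<close>)
  show ?thesis unfolding pos_def mless_def using z0 L assms(1) by auto
qed

lemma pos_elim:
  fixes z :: "'o::wellorder lexp"
  assumes "pos z"
  obtains k where "z k > 0" "\<forall>c<k. z c = 0"
proof -
  let ?k = "LEAST b. (0::'o lexp) b \<noteq> z b"
  have "z ?k > 0" using assms unfolding pos_def mless_def by auto
  moreover have "\<forall>c<?k. z c = 0" using not_less_Least[of _ "\<lambda>b. (0::'o lexp) b \<noteq> z b"] by auto
  ultimately show ?thesis using that by blast
qed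

lemma pos_add: "pos a \<Longrightarrow> pos b \<Longrightarrow> pos (a + b)"
proof -
  assume "pos a" "pos b"
  then obtain i j where i: "a i > 0" "\<forall>c<i. a c = 0" and j: "b j > 0" "\<forall>c<j. b c = 0"
    by (metis pos_elim)
  show ?thesis
  proof (cases "i \<le> j")
    case True
    have "(a+b) i > 0" using i j True by (cases "i = j") (auto intro: add_pos_pos)
    then show ?thesis using i j True by (intro pos_intro[of _ i]) auto
  next
    case False
    have "(a+b) j > 0" using i j False by auto
    then show ?thesis using i j False by (intro pos_intro[of _ j]) auto
  qed
qed

lemma pos_not0: "pos z \<Longrightarrow> z \<noteq> 0"
  by (auto elim: pos_elim)

lemma pos_asym: "pos z \<Longrightarrow> \<not> pos (- z)"
proof
  assume "pos z" "pos (-z)"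
  then obtain i j where i: "z i > 0" "\<forall>c<i. z c = 0" and j: "(-z) j > 0" "\<forall>c<j. (-z) c = 0"
    by (metis pos_elim)
  show False using i j by (cases i j rule: linorder_cases) auto
qed

lemma pos_total: "z = 0 \<or> pos z \<or> pos (- z)"
proof (cases "z = 0")
  case False
  let ?k = "LEAST b. z b \<noteq> 0"
  have "\<exists>b. z b \<noteq> 0" using False by (auto simp: fun_eq_iff)
  then have nz: "z ?k \<noteq> 0" by (rule LeastI_ex)
  have below: "\<forall>c<?k. z c = 0" using not_less_Least[of _ "\<lambda>b. z b \<noteq> 0"] by auto
  show ?thesis
  proof (cases "z ?k > 0")
    case True then show ?thesis using below by (auto intro: pos_intro)
  next
    case False
    then have "(-z) ?k > 0" using nz by auto
    then show ?thesis using below by (auto intro: pos_intro)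
  qed
qed simp

lemma pos_scl: "c > 0 \<Longrightarrow> pos z \<Longrightarrow> pos (scl c z)"
proof -
  assume c: "c > 0" and "pos z"
  then obtain k where k: "z k > 0" "\<forall>c<k. z c = 0" by (metis pos_elim)
  show ?thesis by (rule pos_intro[of _ k]) (use c k in \<open>auto simp: scl_def\<close>)
qed

lemma nn_scl: "c \<ge> 0 \<Longrightarrow> pos z \<Longrightarrow> nn (scl c z)"
proof (cases "c = 0")
  case True then show ?thesis by (simp add: nn_def scl_def fun_eq_iff zero_fun_def)
next
  case False
  assume "c \<ge> 0" "pos z"
  then show ?thesis using False pos_scl[of c z] by (simp add: nn_def)
qed

lemma pos_bot: "z bot0 > 0 \<Longrightarrow> pos (z::'o::wellorder lexp)"
  by (rule pos_intro[of _ bot0]) (auto, metis bot0_le not_le)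

lemma nn_pointwise: "(\<forall>c. z c \<ge> 0) \<Longrightarrow> nn z"
proof -
  assume A: "\<forall>c. z c \<ge> 0"
  have "z = 0 \<or> pos z \<or> pos (-z)" by (rule pos_total)
  moreover have "\<not> pos (-z)"
  proof
    assume "pos (-z)" then obtain k where "(-z) k > 0" by (metis pos_elim)
    then have "z k < 0" by simp
    with A show False by (meson not_le)
  qed
  ultimately show ?thesis by (auto simp: nn_def)
qed

lemma pos_nn_add: "pos a \<Longrightarrow> nn b \<Longrightarrow> pos (a + b)"
  by (auto simp: nn_def pos_add)
lemma nn_add: "nn a \<Longrightarrow> nn b \<Longrightarrow> nn (a + b)"
  by (auto simp: nn_def pos_add)
lemma pos_nn: "pos a \<Longrightarrow> nn a" by (simp add: nn_def)

lemma mless_pos: "mless r s \<longleftrightarrow> pos (s - (r::'o::wellorder lexp))"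
proof -
  have e: "(\<lambda>b. (0::'o lexp) b \<noteq> (s - r) b) = (\<lambda>b. r b \<noteq> s b)" by auto
  have "(0 \<noteq> s - r) \<longleftrightarrow> r \<noteq> s" by auto
  then show ?thesis unfolding pos_def mless_def e by auto
qed

lemma nn_not_pos: "nn z \<Longrightarrow> pos (- z) \<Longrightarrow> False"
  unfolding nn_def using pos_asym pos_not0 by fastforce

lemma mless_irrefl: "\<not> mless r r" by (simp add: mless_def)
lemma mless_asym: "mless r s \<Longrightarrow> \<not> mless s (r::'o::wellorder lexp)"
proof
  assume "mless r s" "mless s r"
  then have "pos (s - r)" "pos (r - s)" by (simp_all add: mless_pos)
  moreover have "r - s = - (s - r)" by simp
  ultimately show False using pos_asym by metis
qed
lemma mless_trans: "mless r s \<Longrightarrow> mless s u \<Longrightarrow> mless r (u::'o::wellorder lexp)"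
proof -
  assume "mless r s" "mless s u"
  then have "pos (s - r)" "pos (u - s)" by (simp_all add: mless_pos)
  then have "pos ((s - r) + (u - s))" by (rule pos_add)
  moreover have "(s - r) + (u - s) = u - r" by simp
  ultimately show ?thesis by (simp add: mless_pos)
qed
lemma mless_total: "r \<noteq> s \<Longrightarrow> mless r s \<or> mless s (r::'o::wellorder lexp)"
proof -
  assume "r \<noteq> s"
  then have "s - r \<noteq> 0" by simp
  moreover have "r - s = - (s - r)" by simp
  ultimately show ?thesis using pos_total[of "s - r"] by (simp add: mless_pos)
qed

definition mle :: "'o::wellorder lexp \<Rightarrow> 'o lexp \<Rightarrow> bool" where
  "mle r s \<longleftrightarrow> r = s \<or> mless r s"

lemma mle_nn: "mle r s \<longleftrightarrow> nn (s - (r::'o::wellorder lexp))"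
  by (auto simp: mle_def nn_def mless_pos)

lemma chain_mless:
  assumes "\<forall>n. mless (s n) (s (Suc n))" "i < j"
  shows "mless (s i) (s (j::nat))"
  using assms(2)
proof (induction j)
  case 0 then show ?case by simp
next
  case (Suc j)
  then show ?case using assms(1) mless_trans by (metis less_Suc_eq)
qed

lemma wb_max:
  assumes "wellbased S" "S \<noteq> {}"
  shows "\<exists>M\<in>S. \<forall>s\<in>S. s = M \<or> mless s M"
proof (rule ccontr)
  assume "\<not> ?thesis"
  then have "\<forall>M\<in>S. \<exists>s\<in>S. mless M s" using mless_total by metis
  then obtain nxt where nxt: "\<forall>M\<in>S. nxt M \<in> S \<and> mless M (nxt M)" by metis
  obtain s0 where s0: "s0 \<in> S" using assms(2) by auto
  define sq where "sq n = (nxt ^^ n) s0" for n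
  have inS: "sq n \<in> S" for n by (induction n) (auto simp: sq_def s0 nxt)
  have "\<forall>n. sq n \<in> S \<and> mless (sq n) (sq (Suc n))" using inS nxt by (auto simp: sq_def)
  then show False using assms(1) unfolding wellbased_def by blast
qed

lemma wb_from_max:
  assumes "\<And>Y. Y \<subseteq> S \<Longrightarrow> Y \<noteq> {} \<Longrightarrow> \<exists>M\<in>Y. \<forall>s\<in>Y. s = M \<or> mless s M"
  shows "wellbased S"
  unfolding wellbased_def
proof
  assume "\<exists>s. \<forall>n. s n \<in> S \<and> mless (s n) (s (Suc n))"
  then obtain s where s: "\<forall>n. s n \<in> S \<and> mless (s n) (s (Suc n))" by blast
  then obtain M where M: "M \<in> range s" "\<forall>x\<in>range s. x = M \<or> mless x M"
    using assms[of "range s"] by blast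
  then obtain k where "M = s k" by auto
  then show False using M(2) s mless_asym mless_irrefl by (metis rangeI)
qed

lemma wb_subset: "wellbased S \<Longrightarrow> T \<subseteq> S \<Longrightarrow> wellbased T"
  unfolding wellbased_def by blast

lemma wb_Un:
  assumes "wellbased A" "wellbased B"
  shows "wellbased (A \<union> B)"
proof (rule wb_from_max)
  fix Y assume Y: "Y \<subseteq> A \<union> B" "Y \<noteq> {}"
  show "\<exists>M\<in>Y. \<forall>s\<in>Y. s = M \<or> mless s M"
  proof (cases "Y \<inter> A = {}")
    case True
    then have "Y \<subseteq> B" using Y by auto
    then show ?thesis using wb_max[OF wb_subset[OF assms(2)] Y(2)] by blast
  next
    case FA: False
    obtain MA where MA: "MA \<in> Y \<inter> A" "\<forall>s\<in>Y \<inter> A. s = MA \<or> mless s MA"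
      using wb_max[OF wb_subset[OF assms(1)] FA] by blast
    show ?thesis
    proof (cases "Y \<inter> B = {}")
      case True
      then have "Y \<subseteq> A" using Y by auto
      then show ?thesis using wb_max[OF wb_subset[OF assms(1)] Y(2)] by blast
    next
      case FB: False
      obtain MB where MB: "MB \<in> Y \<inter> B" "\<forall>s\<in>Y \<inter> B. s = MB \<or> mless s MB"
        using wb_max[OF wb_subset[OF assms(2)] FB] by blast
      show ?thesis
      proof (cases "MA = MB \<or> mless MA MB")
        case True
        have "\<forall>s\<in>Y. s = MB \<or> mless s MB"
        proof
          fix s assume "s \<in> Y"
          then have "s \<in> Y \<inter> A \<or> s \<in> Y \<inter> B" using Y(1) by blast
          then show "s = MB \<or> mless s MB"
          proof
            assume "s \<in> Y \<inter> A"
            then have "s = MA \<or> mless s MA" using MA(2) by blast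
            then show ?thesis using True mless_trans by blast
          next
            assume "s \<in> Y \<inter> B"
            then show ?thesis using MB(2) by blast
          qed
        qed
        then show ?thesis using MB(1) by blast
      next
        case False
        then have T: "mless MB MA" using mless_total by blast
        have "\<forall>s\<in>Y. s = MA \<or> mless s MA"
        proof
          fix s assume "s \<in> Y"
          then have "s \<in> Y \<inter> A \<or> s \<in> Y \<inter> B" using Y(1) by blast
          then show "s = MA \<or> mless s MA"
          proof
            assume "s \<in> Y \<inter> B"
            then have "s = MB \<or> mless s MB" using MB(2) by blast
            then show ?thesis using T mless_trans by blast
          next
            assume "s \<in> Y \<inter> A"
            then show ?thesis using MA(2) by blast
          qed
        qed
        then show ?thesis using MA(1) by blast
      qed
    qed
  qed
qed

lemma wb_finite:
  assumes "finite S"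
  shows "wellbased S"
  unfolding wellbased_def
proof
  assume "\<exists>s. \<forall>n. s n \<in> S \<and> mless (s n) (s (Suc n))"
  then obtain s where s: "\<forall>n. s n \<in> S" "\<forall>n. mless (s n) (s (Suc n))" by blast
  have "inj s"
  proof (rule injI)
    fix i j assume "s i = s j"
    then show "i = j" using chain_mless[OF s(2)] mless_irrefl
      by (metis linorder_neqE_nat)
  qed
  moreover have "s ` UNIV \<subseteq> S" using s by auto
  ultimately have "finite (UNIV :: nat set)" using assms inj_on_finite by blast
  then show False by simp
qed

lemma wb_bound:
  assumes "wellbased S"
  shows "\<exists>M. (\<forall>s\<in>S. mle s M) \<and> (M \<in> S \<or> M = 0)"
proof (cases "S = {}")
  case True then show ?thesis by auto
next
  case False
  then show ?thesis using wb_max[OF assms False] unfolding mle_def by blast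
qed

lemma dexp_eq:
  assumes "u r \<noteq> 0" "\<forall>s. u s \<noteq> 0 \<longrightarrow> s = r \<or> mless s r"
  shows "dexp u = r"
  unfolding dexp_def
proof (rule the_equality)
  show "u r \<noteq> 0 \<and> (\<forall>s. u s \<noteq> 0 \<longrightarrow> s = r \<or> mless s r)" using assms by blast
next
  fix r' assume "u r' \<noteq> 0 \<and> (\<forall>s. u s \<noteq> 0 \<longrightarrow> s = r' \<or> mless s r')"
  then show "r' = r" using assms mless_asym by metis
qed

lemma dexp_prop:
  assumes "wellbased (supp u)" "u \<noteq> (\<lambda>_. 0)"
  shows "u (dexp u) \<noteq> 0 \<and> (\<forall>s. u s \<noteq> 0 \<longrightarrow> s = dexp u \<or> mless s (dexp u))"
proof -
  have "supp u \<noteq> {}" using assms(2) by (auto simp: supp_def)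
  then obtain M where M: "M \<in> supp u" "\<forall>s\<in>supp u. s = M \<or> mless s M"
    using wb_max[OF assms(1)] by blast
  then have "dexp u = M" by (intro dexp_eq) (auto simp: supp_def)
  then show ?thesis using M by (auto simp: supp_def)
qed

lemma inL_iff: "inL f \<longleftrightarrow> (\<exists>a. supp f \<subseteq> {r. expbelow a r}) \<and> wellbased (supp f)"
  by (auto simp: inL_def inLlt_def)

lemma expbelow_mono: "expbelow a r \<Longrightarrow> a \<le> a' \<Longrightarrow> expbelow a' r"
  by (auto simp: expbelow_def)

lemma inL_finite: "finite (supp f) \<Longrightarrow> supp f \<subseteq> {r. expbelow a r} \<Longrightarrow> inL f"
  by (auto simp: inL_iff wb_finite)

lemma inL_ssub:
  assumes "inL f" "inL g" shows "inL (ssub f g)"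
proof -
  obtain a b where a: "supp f \<subseteq> {r. expbelow a r}" "wellbased (supp f)"
    and b: "supp g \<subseteq> {r. expbelow b r}" "wellbased (supp g)"
    using assms by (auto simp: inL_iff)
  have sub: "supp (ssub f g) \<subseteq> supp f \<union> supp g" by (auto simp: supp_def ssub_def)
  have "supp (ssub f g) \<subseteq> {r. expbelow (max a b) r}"
  proof
    fix r assume "r \<in> supp (ssub f g)"
    then have "expbelow a r \<or> expbelow b r" using sub a b by blast
    then show "r \<in> {r. expbelow (max a b) r}"
      using expbelow_mono[of a r "max a b"] expbelow_mono[of b r "max a b"] by auto
  qed
  moreover have "wellbased (supp (ssub f g))"
    using wb_subset[OF wb_Un[OF a(2) b(2)] sub] .
  ultimately show ?thesis by (auto simp: inL_iff)
qed

lemma smult_alt: "smult u v q = sum (\<lambda>a. u a * v (q - a)) {a. u a \<noteq> 0 \<and> v (q - a) \<noteq> 0}"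
  by (simp add: smult_def fun_diff_def)

lemma smult_nz: "smult u v q \<noteq> 0 \<Longrightarrow> \<exists>a. u a \<noteq> 0 \<and> v (q - a) \<noteq> 0"
proof -
  assume A: "smult u v q \<noteq> 0"
  show ?thesis
  proof (rule ccontr)
    assume "\<not> ?thesis"
    then have E: "{a. u a \<noteq> 0 \<and> v (q - a) \<noteq> 0} = {}" by blast
    show False using A unfolding smult_alt E by simp
  qed
qed

lemma smult_smono: "smult u (smono s) q = u (q - s)"
proof -
  have "{a. u a \<noteq> 0 \<and> smono s (q - a) \<noteq> 0} = (if u (q - s) \<noteq> 0 then {q - s} else {})"
    by (auto simp: smono_def)
  then show ?thesis unfolding smult_alt by (auto simp: smono_def)
qed

lemma sconst1: "sconst 1 = smono 0"
  by (auto simp: sconst_def smono_def fun_eq_iff zero_fun_def)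

lemma smult_one: "smult u (sconst 1) = u"
  by (simp add: sconst1 smult_smono fun_eq_iff)

lemma spow_0: "spow f 0 = sconst 1" by (simp add: spow_def)
lemma spow_Suc: "spow f (Suc n) = smult f (spow f n)" by (simp add: spow_def)

lemma smono_eq: "smono e q = (if q = e then 1 else 0)" by (simp add: smono_def)

lemma spow_smono: "spow (smono e) n = smono (scl (real n) e)"
proof (induction n)
  case 0 then show ?case by (simp add: spow_0 sconst1 scl_def zero_fun_def)
next
  case (Suc n)
  have "smult (smono e) (smono (scl (real n) e)) q = smono (scl (real (Suc n)) e) q" for q
  proof -
    have "(q - scl (real n) e = e) \<longleftrightarrow> (q = scl (real (Suc n)) e)"
      by (auto simp: fun_eq_iff scl_def algebra_simps)
    then show ?thesis by (simp add: smult_smono smono_eq)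
  qed
  then show ?case by (simp add: spow_Suc Suc fun_eq_iff)
qed

lemma spow_one: "spow (sconst 1) n = sconst 1"
  by (simp add: sconst1 spow_smono scl_def zero_fun_def)

lemma spow_1: "spow f 1 = f"
proof -
  have "spow f (Suc 0) = smult f (sconst 1)" by (simp add: spow_def)
  then show ?thesis by (simp add: smult_one)
qed

lemma fsum_nz: "fsum F m \<noteq> 0 \<Longrightarrow> \<exists>i. F i m \<noteq> 0"
proof -
  assume A: "fsum F m \<noteq> 0"
  show ?thesis
  proof (rule ccontr)
    assume "\<not> ?thesis"
    then have E: "{i. F i m \<noteq> 0} = {}" by blast
    show False using A unfolding fsum_def E by simp
  qed
qed

lemma fsum_01:
  assumes "\<forall>n\<ge>2. F n m = 0"
  shows "fsum F m = F 0 m + F (1::nat) m"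
proof -
  have sub: "{i. F i m \<noteq> 0} \<subseteq> {0, 1}"
  proof
    fix i assume "i \<in> {i. F i m \<noteq> 0}"
    then have "\<not> i \<ge> 2" using assms by auto
    then show "i \<in> {0, 1}" by auto
  qed
  have "fsum F m = sum (\<lambda>i. F i m) {0, 1}"
    unfolding fsum_def by (rule sum.mono_neutral_left) (use sub in auto)
  then show ?thesis by simp
qed

lemma fsum_minus0:
  assumes "finite {i. F i m \<noteq> 0}"
  shows "fsum F m - F (0::nat) m = sum (\<lambda>i. F i m) ({i. F i m \<noteq> 0} - {0})"
proof (cases "F 0 m = 0")
  case True
  then have "{i. F i m \<noteq> 0} - {0} = {i. F i m \<noteq> 0}" by auto
  then show ?thesis using True by (simp add: fsum_def)
next
  case False
  then show ?thesis using assms by (simp add: fsum_def sum_diff1)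
qed

definition ind :: "'o::wellorder \<Rightarrow> 'o lexp" where
  "ind b = (\<lambda>c. if c \<le> b then 1 else 0)"

lemma der_supp:
  assumes "der u m \<noteq> 0"
  shows "\<exists>r b. u r \<noteq> 0 \<and> r b \<noteq> 0 \<and> m = r - ind b"
proof -
  obtain i where i: "(\<lambda>(r, b). sscale (u r * r b) (smono (\<lambda>c. r c - (if c \<le> b then 1 else 0)))) i m \<noteq> 0"
    using fsum_nz[of _ m] assms unfolding der_def by blast
  obtain r b where rb: "i = (r, b)" by (cases i)
  have "u r * r b \<noteq> 0 \<and> m = (\<lambda>c. r c - (if c \<le> b then 1 else 0))"
    using i rb by (auto simp: sscale_def smono_def split: if_splits)
  moreover have "(\<lambda>c. r c - (if c \<le> b then 1 else 0)) = r - ind b" by (auto simp: ind_def fun_eq_iff)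
  ultimately show ?thesis by auto
qed

lemma subseq_dec:
  fixes r :: "nat \<Rightarrow> 'o::wellorder lexp"
  assumes wb: "wellbased S" and rS: "\<forall>n. r n \<in> S"
  shows "\<exists>\<phi>. strict_mono \<phi> \<and> (\<forall>n. mle (r (\<phi> (Suc n))) (r (\<phi> n)))"
proof -
  have "\<forall>k. \<exists>j. j \<ge> k \<and> (\<forall>i\<ge>k. mle (r i) (r j))"
  proof
    fix k :: nat
    have Y: "r ` {k..} \<subseteq> S" "r ` {k..} \<noteq> {}" using rS by auto
    obtain M where M: "M \<in> r ` {k..}" "\<forall>s\<in>r ` {k..}. s = M \<or> mless s M"
      using wb_max[OF wb_subset[OF wb Y(1)] Y(2)] by blast
    then obtain j where j: "j \<ge> k" "M = r j" by auto
    have "\<forall>i\<ge>k. mle (r i) (r j)" using M(2) j unfolding mle_def by auto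
    then show "\<exists>j. j \<ge> k \<and> (\<forall>i\<ge>k. mle (r i) (r j))" using j by blast
  qed
  then obtain idx where idx: "\<forall>k. idx k \<ge> k \<and> (\<forall>i\<ge>k. mle (r i) (r (idx k)))" by metis
  define \<phi> where "\<phi> = rec_nat (idx 0) (\<lambda>_ p. idx (Suc p))"
  have p0: "\<phi> 0 = idx 0" and pS: "\<phi> (Suc n) = idx (Suc (\<phi> n))" for n by (simp_all add: \<phi>_def)
  have sm: "strict_mono \<phi>"
    unfolding strict_mono_Suc_iff using idx pS by (metis Suc_le_lessD)
  have Q: "\<forall>i\<ge>\<phi> n. mle (r i) (r (\<phi> n))" for n
  proof (cases n)
    case 0 then show ?thesis using idx p0 by auto
  next
    case (Suc m)
    then show ?thesis using idx pS[of m] by (metis le_trans)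
  qed
  have "\<forall>n. mle (r (\<phi> (Suc n))) (r (\<phi> n))"
    using Q sm by (simp add: strict_mono_Suc_iff less_imp_le)
  then show ?thesis using sm by blast
qed

lemma ind_mono: "b \<le> b' \<Longrightarrow> nn (ind b' - ind b)"
  by (rule nn_pointwise) (auto simp: ind_def)

lemma mle_mless_False: "mle x y \<Longrightarrow> mless y x \<Longrightarrow> False"
  unfolding mle_def using mless_asym mless_irrefl by blast

lemma der_wb:
  assumes wb: "wellbased S"
  shows "wellbased {s. \<exists>r b. r \<in> S \<and> s = r - ind b}"
  unfolding wellbased_def
proof
  assume "\<exists>s. \<forall>n. s n \<in> {s. \<exists>r b. r \<in> S \<and> s = r - ind b} \<and> mless (s n) (s (Suc n))"
  then obtain s where s: "\<forall>n. \<exists>r b. r \<in> S \<and> s n = r - ind b" "\<forall>n. mless (s n) (s (Suc n))"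
    by blast
  then obtain R B where RB: "\<forall>n. R n \<in> S \<and> s n = R n - ind (B n)" by metis
  obtain \<phi> where phi: "strict_mono \<phi>" "\<forall>n. mle (R (\<phi> (Suc n))) (R (\<phi> n))"
    using subseq_dec[OF wb] RB by blast
  define \<beta> where "\<beta> = (LEAST \<beta>. \<beta> \<in> range (\<lambda>n. B (\<phi> n)))"
  have "\<beta> \<in> range (\<lambda>n. B (\<phi> n))" unfolding \<beta>_def by (rule LeastI) auto
  then obtain i where i: "B (\<phi> i) = \<beta>" by auto
  have le: "B (\<phi> i) \<le> B (\<phi> (Suc i))" unfolding i \<beta>_def by (rule Least_le) auto
  have "nn (R (\<phi> i) - R (\<phi> (Suc i)))" using phi(2) by (simp add: mle_nn)
  moreover have "nn (ind (B (\<phi> (Suc i))) - ind (B (\<phi> i)))" using ind_mono[OF le] .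
  ultimately have "nn ((R (\<phi> i) - R (\<phi> (Suc i))) + (ind (B (\<phi> (Suc i))) - ind (B (\<phi> i))))"
    by (rule nn_add)
  moreover have "(R (\<phi> i) - R (\<phi> (Suc i))) + (ind (B (\<phi> (Suc i))) - ind (B (\<phi> i)))
      = s (\<phi> i) - s (\<phi> (Suc i))" using RB by simp
  ultimately have "mle (s (\<phi> (Suc i))) (s (\<phi> i))" by (simp add: mle_nn)
  moreover have "mless (s (\<phi> i)) (s (\<phi> (Suc i)))"
    using chain_mless[OF s(2)] phi(1) by (simp add: strict_mono_Suc_iff)
  ultimately show False by (rule mle_mless_False)
qed

lemma der_inL:
  assumes "inL u" shows "inL (der u)"
proof -
  obtain a where a: "supp u \<subseteq> {r. expbelow a r}" "wellbased (supp u)"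
    using assms by (auto simp: inL_iff)
  have sub: "supp (der u) \<subseteq> {s. \<exists>r b. r \<in> supp u \<and> s = r - ind b}"
    using der_supp by (fastforce simp: supp_def)
  have "supp (der u) \<subseteq> {r. expbelow a r}"
  proof
    fix s assume "s \<in> supp (der u)"
    then have "der u s \<noteq> 0" by (simp add: supp_def)
    then obtain r b where rb: "u r \<noteq> 0" "r b \<noteq> 0" "s = r - ind b"
      using der_supp by blast
    have er: "expbelow a r" using a(1) rb(1) by (auto simp: supp_def)
    then have ba: "b < a" using rb(2) by (auto simp: expbelow_def)
    have "expbelow a s"
      unfolding expbelow_def
    proof (intro allI impI)
      fix c assume "s c \<noteq> 0"
      then have "r c \<noteq> 0 \<or> c \<le> b" using rb(3) by (auto simp: ind_def split: if_splits)
      then show "c < a" using er ba by (auto simp: expbelow_def)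
    qed
    then show "s \<in> {r. expbelow a r}" by simp
  qed
  moreover have "wellbased (supp (der u))" using wb_subset[OF der_wb[OF a(2)] sub] .
  ultimately show ?thesis by (auto simp: inL_iff)
qed

lemma comp_inL: "composition cmp \<Longrightarrow> inL f \<Longrightarrow> inL g \<Longrightarrow> sgtR g \<Longrightarrow> inL (cmp f g)"
  unfolding composition_def by blast
lemma comp_x: "composition cmp \<Longrightarrow> inL f \<Longrightarrow> cmp f xL = f"
  unfolding composition_def by blast
lemma comp_assoc: "composition cmp \<Longrightarrow> inL f \<Longrightarrow> inL g \<Longrightarrow> sgtR g \<Longrightarrow> inL h \<Longrightarrow> sgtR h \<Longrightarrow>
    cmp (cmp f g) h = cmp f (cmp g h)"
  unfolding composition_def by blast

lemma taylor:
  assumes "admits_taylor cmp" "inL f" "inL g" "sgtR g" "inL h" "sprec h g"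
  shows "summable_fam (\<lambda>n::nat. sscale (1 / fact n) (smult (cmp ((der ^^ n) f) g) (spow h n)))
     \<and> fsum (\<lambda>n::nat. sscale (1 / fact n) (smult (cmp ((der ^^ n) f) g) (spow h n))) = cmp f (sadd g h)"
  using assms unfolding admits_taylor_def Let_def by blast

definition xe :: "'o::wellorder lexp" where "xe = (\<lambda>b. if b = bot0 then 1 else 0)"

lemma xL_smono: "xL = smono xe"
  by (simp add: xL_def ell_def xe_def bot0_def)

lemma pos_xe: "pos xe" by (rule pos_bot) (simp add: xe_def)

lemma xe_ne0: "xe \<noteq> 0" using pos_xe pos_not0 by blast

lemma mless_0_xe: "mless 0 xe" using pos_xe by (simp add: pos_def)

lemma supp_smono: "supp (smono e) = {e}" by (auto simp: supp_def smono_def)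

lemma inL_smono: "expbelow a e \<Longrightarrow> inL (smono e)"
  by (rule inL_finite[of _ a]) (auto simp: supp_smono)

lemma inL_sconst1: "inL (sconst 1)"
  by (simp add: sconst1 inL_smono expbelow_def)

lemma inL_xL: "bot0 < (A::'o::wellorder) \<Longrightarrow> inL (xL :: 'o ser)"
  unfolding xL_smono by (rule inL_smono[of A]) (auto simp: expbelow_def xe_def)

lemma dexp_smono: "dexp (smono e) = e"
  by (rule dexp_eq) (auto simp: smono_def)

lemma dexp_sconst1: "dexp (sconst 1) = 0"
  by (simp add: sconst1 dexp_smono)

lemma spos_crit:
  assumes "z r > 0" "\<forall>s. z s \<noteq> 0 \<longrightarrow> s = r \<or> mless s r"
  shows "spos z"
proof -
  have "dexp z = r" using assms by (intro dexp_eq) auto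
  moreover have "z \<noteq> (\<lambda>_. 0)" using assms(1) by (metis less_irrefl)
  ultimately show ?thesis using assms(1) by (simp add: spos_def)
qed

lemma sgtR_crit:
  assumes "w xe = 1" "\<forall>s. s \<noteq> xe \<longrightarrow> w s \<noteq> 0 \<longrightarrow> mless s xe"
  shows "sgtR w"
  unfolding sgtR_def
proof
  fix c
  let ?z = "ssub w (sconst c)"
  have x0: "xe \<noteq> (\<lambda>_. 0)" using xe_ne0 by (simp add: zero_fun_def)
  have "?z xe = 1" using assms(1) x0 by (auto simp: ssub_def sconst_def)
  then have "?z xe > 0" by simp
  moreover have "\<forall>s. ?z s \<noteq> 0 \<longrightarrow> s = xe \<or> mless s xe"
  proof (intro allI impI)
    fix s assume nz: "?z s \<noteq> 0"
    show "s = xe \<or> mless s xe"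
    proof (cases "s = xe")
      case False
      then have "w s \<noteq> 0 \<or> s = (\<lambda>_. 0)" using nz by (auto simp: ssub_def sconst_def split: if_splits)
      then show ?thesis using assms(2) False mless_0_xe by (auto simp: zero_fun_def)
    qed simp
  qed
  ultimately show "spos ?z" by (rule spos_crit)
qed

lemma sgtR_xL: "sgtR xL"
  by (rule sgtR_crit) (auto simp: xL_smono smono_def)

lemma sgtR_dexp:
  assumes "inL g" "sgtR g"
  shows "g \<noteq> (\<lambda>_. 0) \<and> mless 0 (dexp g)"
proof -
  have wb: "wellbased (supp g)" using assms(1) by (auto simp: inL_iff)
  have g0: "g \<noteq> (\<lambda>_. 0)"
  proof
    assume "g = (\<lambda>_. 0)"
    then have "ssub g (sconst 0) = (\<lambda>_. 0)" by (auto simp: ssub_def sconst_def)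
    then show False using assms(2) by (auto simp: sgtR_def spos_def)
  qed
  have dp: "g (dexp g) \<noteq> 0 \<and> (\<forall>s. g s \<noteq> 0 \<longrightarrow> s = dexp g \<or> mless s (dexp g))"
    by (rule dexp_prop[OF wb g0])
  have "mless 0 (dexp g)"
  proof (rule ccontr)
    assume A: "\<not> mless 0 (dexp g)"
    then have le: "dexp g = 0 \<or> mless (dexp g) 0" using mless_total by blast
    define c where "c = g 0 + 1"
    let ?z = "ssub g (sconst c)"
    have z0: "?z 0 = -1" by (simp add: ssub_def sconst_def c_def zero_fun_def)
    have "\<forall>s. ?z s \<noteq> 0 \<longrightarrow> s = 0 \<or> mless s 0"
    proof (intro allI impI)
      fix s assume "?z s \<noteq> 0"
      then have "s = 0 \<or> g s \<noteq> 0" by (auto simp: ssub_def sconst_def zero_fun_def split: if_splits)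
      then show "s = 0 \<or> mless s 0" using dp le mless_trans by metis
    qed
    then have "dexp ?z = 0" using z0 by (intro dexp_eq) auto
    moreover have "spos ?z" using assms(2) by (simp add: sgtR_def)
    ultimately show False using z0 by (simp add: spos_def)
  qed
  then show ?thesis using g0 by blast
qed

lemma smult_spow_smono: "smult u (spow (smono e) k) q = u (q - scl (real k) e)"
  by (simp add: spow_smono smult_smono)

lemma spow_supp:
  assumes "\<forall>q. d q \<noteq> 0 \<longrightarrow> mle q B"
  shows "spow d n q \<noteq> 0 \<Longrightarrow> mle q (scl (real n) B)"
proof (induction n arbitrary: q)
  case 0
  then have "q = 0" by (auto simp: spow_0 sconst_def zero_fun_def split: if_splits)
  then show ?case by (simp add: mle_def scl_def zero_fun_def)
next
  case (Suc n)
  then have "smult d (spow d n) q \<noteq> 0" by (simp add: spow_Suc)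
  then obtain a where a: "d a \<noteq> 0" "spow d n (q - a) \<noteq> 0" using smult_nz by blast
  have "nn (B - a)" using assms a(1) by (simp add: mle_nn)
  moreover have "nn (scl (real n) B - (q - a))" using Suc.IH[OF a(2)] mle_nn by blast
  ultimately have "nn ((B - a) + (scl (real n) B - (q - a)))" by (rule nn_add)
  moreover have "(B - a) + (scl (real n) B - (q - a)) = scl (real (Suc n)) B - q"
    by (simp add: scl_def fun_eq_iff algebra_simps)
  ultimately show ?case by (simp add: mle_nn)
qed

lemma fam_bound:
  assumes "summable_fam (H :: 'i \<Rightarrow> 'o::wellorder ser)"
  shows "\<exists>M a. (\<forall>i s. H i s \<noteq> 0 \<longrightarrow> mle s M) \<and> expbelow a M"
proof -
  obtain a where a: "\<forall>i. supp (H i) \<subseteq> {r. expbelow a r}" and wb: "wellbased (\<Union>i. supp (H i))"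
    using assms by (auto simp: summable_fam_def)
  obtain M where M: "\<forall>s\<in>(\<Union>i. supp (H i)). mle s M" "M \<in> (\<Union>i. supp (H i)) \<or> M = 0"
    using wb_bound[OF wb] by blast
  have "expbelow a M" using M(2) a by (auto simp: expbelow_def zero_fun_def)
  moreover have "\<forall>i s. H i s \<noteq> 0 \<longrightarrow> mle s M" using M(1) by (auto simp: supp_def)
  ultimately show ?thesis by blast
qed

lemma fam_finite: "summable_fam H \<Longrightarrow> finite {i. H i m \<noteq> 0}"
  by (simp add: summable_fam_def)

lemma fam_one_nz: "sscale (1 / fact n) (smult u (spow (sconst 1) n)) a \<noteq> 0 \<longleftrightarrow> u a \<noteq> 0"
  by (simp add: spow_one smult_one sscale_def)

lemma nn_pos_False: "nn z \<Longrightarrow> pos w \<Longrightarrow> w = - z \<Longrightarrow> False"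
  using nn_not_pos by blast

theorem lemma9p2:
  fixes cmp :: "'o::wellorder ser \<Rightarrow> 'o ser \<Rightarrow> 'o ser"
  assumes "\<forall>a::'o. \<exists>b. a < b"
    and "composition cmp"
    and "admits_taylor cmp"
  shows "\<forall>f g. inL f \<and> inL g \<and> sgtR g \<longrightarrow> der (cmp f g) = smult (cmp (der f) g) (der g)"
proof (intro allI impI)
  fix f g :: "'o ser" assume fg: "inL f \<and> inL g \<and> sgtR g"
  then have f: "inL f" and g: "inL g" and gR: "sgtR g" by auto
  note C = assms(2) and T = assms(3)
  obtain A1 :: 'o where A1: "bot0 < A1" using assms(1) by blast
  have xin: "inL (xL::'o ser)" using inL_xL[OF A1] .
  define F where "F = cmp f g"
  have Fin: "inL F" unfolding F_def using comp_inL[OF C f g gR] .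
  have dFin: "inL (der F)" using der_inL[OF Fin] .
  have dgin: "inL (der g)" using der_inL[OF g] .
  have gprop: "g \<noteq> (\<lambda>_. 0) \<and> mless 0 (dexp g)" using sgtR_dexp[OF g gR] .
  have dxL: "dexp (xL::'o ser) = xe" by (simp add: xL_smono dexp_smono)
  have xne: "(xL::'o ser) \<noteq> (\<lambda>_. 0)"
  proof
    assume "(xL::'o ser) = (\<lambda>_. 0)"
    then have "smono (xe::'o lexp) xe = 0" by (metis xL_smono)
    then show False by (simp add: smono_def)
  qed
  have sp1g: "sprec (sconst 1) g" using gprop by (simp add: sprec_def dexp_sconst1)
  have sp1x: "sprec (sconst 1) (xL::'o ser)" using xne by (simp add: sprec_def dexp_sconst1 dxL mless_0_xe)

  define A where "A n = cmp ((der ^^ n) f) g" for n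
  define E where "E k = cmp ((der ^^ k) g) xL" for k
  define Cn where "Cn n = cmp ((der ^^ n) F) xL" for n

  obtain U aU where U0: "\<forall>i s. sscale (1 / fact i) (smult (cmp ((der ^^ i) f) g) (spow (sconst 1) i)) s \<noteq> 0 \<longrightarrow> mle s U"
    using fam_bound[OF conjunct1[OF taylor[OF T f g gR inL_sconst1 sp1g]]] by blast
  have U: "\<And>n a. A n a \<noteq> 0 \<Longrightarrow> mle a U" using U0 fam_one_nz unfolding A_def by blast
  obtain V aV where V0: "\<forall>i s. sscale (1 / fact i) (smult (cmp ((der ^^ i) g) xL) (spow (sconst 1) i)) s \<noteq> 0 \<longrightarrow> mle s V"
     and aV: "expbelow aV V"
    using fam_bound[OF conjunct1[OF taylor[OF T g xin sgtR_xL inL_sconst1 sp1x]]] by blast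
  have V: "\<And>n a. E n a \<noteq> 0 \<Longrightarrow> mle a V" using V0 fam_one_nz unfolding E_def by blast
  obtain W aW where W0: "\<forall>i s. sscale (1 / fact i) (smult (cmp ((der ^^ i) F) xL) (spow (sconst 1) i)) s \<noteq> 0 \<longrightarrow> mle s W"
    using fam_bound[OF conjunct1[OF taylor[OF T Fin xin sgtR_xL inL_sconst1 sp1x]]] by blast
  have W: "\<And>n a. Cn n a \<noteq> 0 \<Longrightarrow> mle a W" using W0 fam_one_nz unfolding Cn_def by blast

  have E0: "E 0 = g" using comp_x[OF C g] by (simp add: E_def)
  have E1: "E (Suc 0) = der g" using comp_x[OF C dgin] by (simp add: E_def)
  have C0: "Cn 0 = F" using comp_x[OF C Fin] by (simp add: Cn_def)
  have C1: "Cn (Suc 0) = der F" using comp_x[OF C dFin] by (simp add: Cn_def)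
  have A0: "A 0 = F" by (simp add: A_def F_def)
  have A1d: "A (Suc 0) = cmp (der f) g" by (simp add: A_def)

  show "der (cmp f g) = smult (cmp (der f) g) (der g)"
  proof (rule ext)
    fix m :: "'o lexp"
    define B0 where "B0 = max aV A1"
    have B0V: "expbelow B0 V" using aV by (rule expbelow_mono) (simp add: B0_def)
    have B0b: "bot0 < B0" using A1 by (simp add: B0_def less_max_iff_disj)
    define K where "K = 1 + \<bar>V bot0\<bar> + \<bar>m bot0 + V bot0 - W bot0\<bar> + \<bar>m bot0 - U bot0\<bar> + \<bar>m bot0 - U bot0 - V bot0\<bar>"
    define t :: "'o lexp" where "t = (\<lambda>b. if b = bot0 then K else 0)"
    define e where "e = - V - t"
    define eps :: "'o ser" where "eps = smono e"
    define p where "p = m + e"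
    have tb: "t bot0 = K" by (simp add: t_def)
    have P1: "pos (V + t)" by (rule pos_bot) (simp add: tb K_def)
    have P2: "pos (m + V + t - W)" by (rule pos_bot) (simp add: tb K_def)
    have P3: "pos (m - U + t)" by (rule pos_bot) (simp add: tb K_def)
    have P4: "pos (m - U - V + t)" by (rule pos_bot) (simp add: tb K_def)
    have Pt: "pos t" by (rule pos_bot) (simp add: tb K_def)
    have mt0: "mless (- t) 0" using Pt by (simp add: mless_pos)
    have P5: "mless e xe"
    proof -
      have "pos (xe + (V + t))" using pos_add[OF pos_xe P1] .
      moreover have "xe + (V + t) = xe - e" by (simp add: e_def algebra_simps)
      ultimately show ?thesis by (simp add: mless_pos)
    qed
    have exe: "e \<noteq> xe" using P5 mless_irrefl by blast
    have eb: "expbelow B0 e"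
      unfolding expbelow_def
    proof (intro allI impI)
      fix b assume "e b \<noteq> 0"
      then have "V b \<noteq> 0 \<or> b = bot0" by (auto simp: e_def t_def split: if_splits)
      then show "b < B0" using B0V B0b by (auto simp: expbelow_def)
    qed
    have epsin: "inL eps" unfolding eps_def using inL_smono[OF eb] .
    have speps: "sprec eps xL" using xne P5 by (simp add: sprec_def eps_def dexp_smono dxL)
    define xpe where "xpe = sadd xL eps"
    have xpein: "inL xpe"
    proof (rule inL_finite[of _ B0])
      show "finite (supp xpe)"
        by (rule finite_subset[of _ "{xe, e}"]) (auto simp: supp_def xpe_def sadd_def eps_def xL_smono smono_def)
      have "expbelow B0 xe" using B0b by (auto simp: expbelow_def xe_def)
      then show "supp xpe \<subseteq> {r. expbelow B0 r}"
        using eb by (auto simp: supp_def xpe_def sadd_def eps_def xL_smono smono_def split: if_splits)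
    qed
    have xpeR: "sgtR xpe"
    proof (rule sgtR_crit)
      show "xpe xe = 1" using exe by (simp add: xpe_def sadd_def eps_def xL_smono smono_def)
      show "\<forall>s. s \<noteq> xe \<longrightarrow> xpe s \<noteq> 0 \<longrightarrow> mless s xe"
        using P5 by (auto simp: xpe_def sadd_def eps_def xL_smono smono_def split: if_splits)
    qed

    define Gf where "Gf k = sscale (1 / fact k) (smult (cmp ((der ^^ k) g) xL) (spow eps k))" for k
    have TG: "summable_fam Gf \<and> fsum Gf = cmp g xpe"
      using taylor[OF T g xin sgtR_xL epsin speps] unfolding Gf_def xpe_def by blast
    have Gfv: "Gf k q = (1 / fact k) * E k (q - scl (real k) e)" for k q
      by (simp add: Gf_def E_def sscale_def eps_def smult_spow_smono)
    define G where "G = cmp g xpe"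
    have Gin: "inL G" unfolding G_def using comp_inL[OF C g xpein xpeR] .
    define d where "d = ssub G g"
    have din: "inL d" unfolding d_def using inL_ssub[OF Gin g] .
    have gd: "sadd g d = G" by (auto simp: d_def sadd_def ssub_def)
    have sc0: "q - scl (real 0) e = q" for q by (simp add: scl_def fun_eq_iff)
    have Gf0: "Gf 0 q = g q" for q using sc0[of q] by (simp add: Gfv E0 del: of_nat_0)
    have dsum: "d q = sum (\<lambda>i. Gf i q) ({i. Gf i q \<noteq> 0} - {0})" for q
    proof -
      have "d q = fsum Gf q - Gf 0 q" using TG Gf0 by (simp add: d_def ssub_def G_def)
      also have "\<dots> = sum (\<lambda>i. Gf i q) ({i. Gf i q \<noteq> 0} - {0})"
        by (rule fsum_minus0) (rule fam_finite, use TG in blast)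
      finally show ?thesis .
    qed
    have dsupp: "d q \<noteq> 0 \<Longrightarrow> mle q (- t)" for q
    proof -
      assume "d q \<noteq> 0"
      then have "({i. Gf i q \<noteq> 0} - {0}) \<noteq> {}" using dsum[of q] by (metis sum.empty)
      then obtain k where k: "Gf k q \<noteq> 0" "k \<noteq> 0" by auto
      then have "E k (q - scl (real k) e) \<noteq> 0" by (simp add: Gfv)
      then have "nn (V - (q - scl (real k) e))" using V mle_nn by blast
      moreover have "nn (scl (real k - 1) (V + t))" using k(2) P1 by (intro nn_scl) auto
      ultimately have "nn ((V - (q - scl (real k) e)) + scl (real k - 1) (V + t))" by (rule nn_add)
      moreover have "(V - (q - scl (real k) e)) + scl (real k - 1) (V + t) = - t - q"
        by (simp add: e_def scl_def fun_eq_iff algebra_simps)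
      ultimately show "mle q (- t)" using mle_nn by metis
    qed
    have spd: "sprec d g"
      unfolding sprec_def
    proof (intro conjI)
      show "g \<noteq> (\<lambda>_. 0)" using gprop by blast
      show "d = (\<lambda>_. 0) \<or> mless (dexp d) (dexp g)"
      proof (cases "d = (\<lambda>_. 0)")
        case False
        have wbd: "wellbased (supp d)" using din by (simp add: inL_iff)
        have "d (dexp d) \<noteq> 0" using dexp_prop[OF wbd False] by blast
        then have "mle (dexp d) (- t)" by (rule dsupp)
        then have "mless (dexp d) 0" using mt0 mless_trans unfolding mle_def by metis
        then show ?thesis using gprop mless_trans by blast
      qed simp
    qed

    define Tf where "Tf n = sscale (1 / fact n) (smult (A n) (spow d n))" for n
    have TT: "fsum Tf = cmp f G"
      using taylor[OF T f g gR din spd] gd unfolding Tf_def A_def by simp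
    define Lf where "Lf n = sscale (1 / fact n) (smult (Cn n) (spow eps n))" for n
    have TL: "fsum Lf = cmp F xpe"
      using taylor[OF T Fin xin sgtR_xL epsin speps] unfolding Lf_def Cn_def xpe_def by simp
    have assoc: "cmp F xpe = cmp f G"
      unfolding F_def G_def using comp_assoc[OF C f g gR xpein xpeR] .
    have eq: "fsum Lf p = fsum Tf p" using TT TL assoc by simp

    have Lfv: "Lf n q = (1 / fact n) * Cn n (q - scl (real n) e)" for n q
      by (simp add: Lf_def sscale_def eps_def smult_spow_smono)
    have Lhi: "\<forall>n\<ge>2. Lf n p = 0"
    proof (intro allI impI)
      fix n :: nat assume n2: "n \<ge> 2"
      have "Cn n (p - scl (real n) e) = 0"
      proof (rule ccontr)
        assume "Cn n (p - scl (real n) e) \<noteq> 0"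
        then have "nn (W - (p - scl (real n) e))" using W mle_nn by blast
        moreover have "nn (scl (real n - 2) (V + t))" using n2 P1 nn_scl[of "real n - 2" "V + t"] by auto
        then have "pos ((m + V + t - W) + scl (real n - 2) (V + t))" using pos_nn_add[OF P2] by blast
        moreover have "(m + V + t - W) + scl (real n - 2) (V + t) = - (W - (p - scl (real n) e))"
          by (simp add: p_def e_def scl_def fun_eq_iff algebra_simps)
        ultimately show False by (rule nn_pos_False)
      qed
      then show "Lf n p = 0" by (simp add: Lfv)
    qed
    have L0: "Lf 0 p = F p" using sc0[of p] by (simp add: Lfv C0 del: of_nat_0)
    have L1: "Lf 1 p = der F m"
    proof -
      have "p - scl 1 e = m" by (simp add: p_def scl_def fun_eq_iff)
      then show ?thesis by (simp add: Lfv C1)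
    qed
    have Thi: "\<forall>n\<ge>2. Tf n p = 0"
    proof (intro allI impI)
      fix n :: nat assume n2: "n \<ge> 2"
      have "smult (A n) (spow d n) p = 0"
      proof (rule ccontr)
        assume "smult (A n) (spow d n) p \<noteq> 0"
        then obtain a where a: "A n a \<noteq> 0" "spow d n (p - a) \<noteq> 0" using smult_nz by blast
        have "nn (U - a)" using U[OF a(1)] mle_nn by blast
        moreover have "nn (scl (real n) (- t) - (p - a))"
          using spow_supp[of d "- t" n "p - a"] dsupp a(2) mle_nn by blast
        ultimately have "nn ((U - a) + (scl (real n) (- t) - (p - a)))" by (rule nn_add)
        moreover have "nn (scl (real n - 2) t)" using n2 Pt nn_scl[of "real n - 2" t] by auto
        then have "pos ((m - U - V + t) + scl (real n - 2) t)" using pos_nn_add[OF P4] by blast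
        moreover have "(m - U - V + t) + scl (real n - 2) t = - ((U - a) + (scl (real n) (- t) - (p - a)))"
          by (simp add: p_def e_def scl_def fun_eq_iff algebra_simps)
        ultimately show False by (rule nn_pos_False)
      qed
      then show "Tf n p = 0" by (simp add: Tf_def sscale_def)
    qed
    have T0: "Tf 0 p = F p" by (simp add: Tf_def sscale_def spow_0 smult_one A0)
    have T1: "Tf 1 p = smult (A 1) d p" by (simp add: Tf_def sscale_def spow_1 del: One_nat_def)
    have key: "der F m = smult (A 1) d p"
      using eq fsum_01[of Lf p, OF Lhi] fsum_01[of Tf p, OF Thi] L0 L1 T0 T1 by simp
    have dval: "d (p - a) = der g (m - a)" if Aa: "A 1 a \<noteq> 0" for a
    proof -
      let ?q = "p - a"
      have Ghi: "\<forall>k\<ge>2. Gf k ?q = 0"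
      proof (intro allI impI)
        fix k :: nat assume k2: "k \<ge> 2"
        have "E k (?q - scl (real k) e) = 0"
        proof (rule ccontr)
          assume "E k (?q - scl (real k) e) \<noteq> 0"
          then have nV: "nn (V - (?q - scl (real k) e))" using V mle_nn by blast
          have nU: "nn (U - a)" using U[OF Aa] mle_nn by blast
          have nS: "nn (scl (real k - 2) (V + t))" using k2 P1 nn_scl[of "real k - 2" "V + t"] by auto
          have pP: "pos ((m - U + t) + ((U - a) + scl (real k - 2) (V + t)))"
            using pos_nn_add[OF P3 nn_add[OF nU nS]] .
          have eqn: "(m - U + t) + ((U - a) + scl (real k - 2) (V + t)) = - (V - (?q - scl (real k) e))"
            by (simp add: p_def e_def scl_def fun_eq_iff algebra_simps)
          show False using nn_pos_False[OF nV pP eqn] .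
        qed
        then show "Gf k ?q = 0" by (simp add: Gfv)
      qed
      have "d ?q = fsum Gf ?q - g ?q" using TG by (simp add: d_def ssub_def G_def)
      also have "\<dots> = Gf 1 ?q" using fsum_01[of Gf ?q, OF Ghi] Gf0 by simp
      also have "\<dots> = der g (m - a)"
      proof -
        have h: "?q - scl (real (Suc 0)) e = m - a" by (simp add: p_def scl_def fun_eq_iff)
        show ?thesis using Gfv[of "Suc 0" ?q] unfolding h E1 by simp
      qed
      finally show ?thesis .
    qed
    have "smult (A 1) d p = smult (A 1) (der g) m"
    proof -
      have S: "{a. A 1 a \<noteq> 0 \<and> d (p - a) \<noteq> 0} = {a. A 1 a \<noteq> 0 \<and> der g (m - a) \<noteq> 0}"
        using dval by auto
      show ?thesis unfolding smult_alt S
        by (rule sum.cong) (auto simp: dval)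
    qed
    then show "der (cmp f g) m = smult (cmp (der f) g) (der g) m"
      using key by (simp add: F_def A1d)
  qed
qed

end
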